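(* Let $n\ge2$ be even. If a variety $\mathcal V$ is $(n+1)$-distributive, then $\mathcal V$ is $2n$-modular, i.e. it satisfies $\alpha(\beta\circ\alpha\gamma\circ\beta)\subseteq\alpha\beta\circ_{2n}\alpha\gamma$ for all congruences $\alpha,\beta,\gamma$.
   Context: $\circ$ is relational composition, juxtaposition is intersection. For relations $X,Y$ and $m\ge1$, $X\circ_m Y$ denotes $X\circ Y\circ X\circ\cdots$ with $m$ factors. A variety is $(n+1)$-distributive if all its algebras satisfy $\alpha(\beta\circ\gamma)\subseteq\alpha\beta\circ_{n+1}\alpha\gamma$ for all congruences $\alpha,\beta,\gamma$; equivalently, it has Jónsson terms $j_0,\dots,j_{n+1}$: ternary terms with $x=j_0(x,y,z)$, $x=j_i(x,y,x)$ for all $i$, $j_i(x,z,z)=j_{i+1}(x,z,z)$ for odd $i$, $j_i(x,x,z)=j_{i+1}(x,x,z)$ for even $i$, and $j_{n+1}(x,y,z)=z$. *)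

theory Defs
  imports Main
begin

datatype ('f, 'v) trm = Var 'v | Fn 'f "('f, 'v) trm list"

fun wf_trm :: "('f \<Rightarrow> nat) \<Rightarrow> ('f, 'v) trm \<Rightarrow> bool" where
  "wf_trm ar (Var v) = True"
| "wf_trm ar (Fn f ts) = (length ts = ar f \<and> (\<forall>t\<in>set ts. wf_trm ar t))"

fun vars_trm :: "('f, 'v) trm \<Rightarrow> 'v set" where
  "vars_trm (Var v) = {v}"
| "vars_trm (Fn f ts) = (\<Union>t\<in>set ts. vars_trm t)"

fun eval :: "('f \<Rightarrow> 'a list \<Rightarrow> 'a) \<Rightarrow> ('v \<Rightarrow> 'a) \<Rightarrow> ('f, 'v) trm \<Rightarrow> 'a" where
  "eval ops \<rho> (Var v) = \<rho> v"
| "eval ops \<rho> (Fn f ts) = ops f (map (eval ops \<rho>) ts)"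

definition is_algebra :: "('f \<Rightarrow> nat) \<Rightarrow> 'a set \<Rightarrow> ('f \<Rightarrow> 'a list \<Rightarrow> 'a) \<Rightarrow> bool" where
  "is_algebra ar A ops \<longleftrightarrow>
     (\<forall>f xs. length xs = ar f \<and> set xs \<subseteq> A \<longrightarrow> ops f xs \<in> A)"

text \<open>A model of the identities E; the variety is the class of all such models.\<close>
definition is_model :: "('f \<Rightarrow> nat) \<Rightarrow> (('f, nat) trm \<times> ('f, nat) trm) set
     \<Rightarrow> 'a set \<Rightarrow> ('f \<Rightarrow> 'a list \<Rightarrow> 'a) \<Rightarrow> bool" where
  "is_model ar E A ops \<longleftrightarrow> is_algebra ar A ops \<and>
     (\<forall>(s, t)\<in>E. \<forall>\<rho>. range \<rho> \<subseteq> A \<longrightarrow> eval ops \<rho> s = eval ops \<rho> t)"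

definition is_congruence :: "('f \<Rightarrow> nat) \<Rightarrow> 'a set \<Rightarrow> ('f \<Rightarrow> 'a list \<Rightarrow> 'a) \<Rightarrow> 'a rel \<Rightarrow> bool" where
  "is_congruence ar A ops \<theta> \<longleftrightarrow> equiv A \<theta> \<and>
     (\<forall>f xs ys. length xs = ar f \<and> length ys = ar f \<and> list_all2 (\<lambda>x y. (x, y) \<in> \<theta>) xs ys
        \<longrightarrow> (ops f xs, ops f ys) \<in> \<theta>)"

text \<open>alt X Y m = X o Y o X o ... with m factors (m \<ge> 1).\<close>
fun alt :: "'a rel \<Rightarrow> 'a rel \<Rightarrow> nat \<Rightarrow> 'a rel" where
  "alt X Y 0 = Id"
| "alt X Y (Suc 0) = X"
| "alt X Y (Suc (Suc k)) = X O alt Y X (Suc k)"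

definition tern :: "('f \<Rightarrow> 'a list \<Rightarrow> 'a) \<Rightarrow> ('f, nat) trm \<Rightarrow> 'a \<Rightarrow> 'a \<Rightarrow> 'a \<Rightarrow> 'a" where
  "tern ops t a b c = eval ops (\<lambda>v. if v = 0 then a else if v = 1 then b else c) t"

definition jonsson_in :: "('f \<Rightarrow> nat) \<Rightarrow> 'a set \<Rightarrow> ('f \<Rightarrow> 'a list \<Rightarrow> 'a) \<Rightarrow> nat
     \<Rightarrow> (nat \<Rightarrow> ('f, nat) trm) \<Rightarrow> bool" where
  "jonsson_in ar A ops n j \<longleftrightarrow>
     (\<forall>a\<in>A. \<forall>b\<in>A. \<forall>c\<in>A.
        tern ops (j 0) a b c = a
      \<and> (\<forall>i\<le>n+1. tern ops (j i) a b a = a)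
      \<and> (\<forall>i\<le>n. odd i \<longrightarrow> tern ops (j i) a c c = tern ops (j (Suc i)) a c c)
      \<and> (\<forall>i\<le>n. even i \<longrightarrow> tern ops (j i) a a c = tern ops (j (Suc i)) a a c)
      \<and> tern ops (j (n+1)) a b c = c)"

definition jonsson_terms :: "('f \<Rightarrow> nat) \<Rightarrow> (nat \<Rightarrow> ('f, nat) trm) \<Rightarrow> nat \<Rightarrow> bool" where
  "jonsson_terms ar j n \<longleftrightarrow> (\<forall>i\<le>n+1. wf_trm ar (j i) \<and> vars_trm (j i) \<subseteq> {0, 1, 2})"

end

theory Submission
  imports Defs
begin

lemma eval_cong:
  assumes C: "is_congruence ar A ops \<theta>"
  shows "wf_trm ar t \<Longrightarrow> (\<forall>v\<in>vars_trm t. (\<rho> v, \<sigma> v) \<in> \<theta>) \<Longrightarrow> (eval ops \<rho> t, eval ops \<sigma> t) \<in> \<theta>"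
proof (induction t)
  case (Var v) then show ?case by simp
next
  case (Fn f ts)
  have "list_all2 (\<lambda>x y. (x,y)\<in>\<theta>) (map (eval ops \<rho>) ts) (map (eval ops \<sigma>) ts)"
    unfolding list_all2_conv_all_nth
  proof (intro conjI allI impI)
    fix i assume i: "i < length (map (eval ops \<rho>) ts)"
    then have m: "ts ! i \<in> set ts" by simp
    have "(eval ops \<rho> (ts ! i), eval ops \<sigma> (ts ! i)) \<in> \<theta>"
      using Fn.IH[OF m] Fn.prems m by auto
    then show "(map (eval ops \<rho>) ts ! i, map (eval ops \<sigma>) ts ! i) \<in> \<theta>" using i by simp
  qed simp
  then show ?case using C Fn.prems by (auto simp: is_congruence_def)
qed

lemma cong_tern:
  assumes "is_congruence ar A ops \<theta>" "wf_trm ar t" "vars_trm t \<subseteq> {0,1,2}"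
    "(x,x')\<in>\<theta>" "(y,y')\<in>\<theta>" "(z,z')\<in>\<theta>"
  shows "(tern ops t x y z, tern ops t x' y' z') \<in> \<theta>"
  unfolding tern_def
  by (rule eval_cong[OF assms(1) assms(2)]) (use assms(3-) in auto)

lemma alt_seq:
  "(\<forall>k<m. (q k, q (Suc k)) \<in> (if even k then X else Y)) \<Longrightarrow> (q 0, q m) \<in> alt X Y m"
proof (induction m arbitrary: X Y q rule: nat_less_induct)
  case (1 m)
  show ?case
  proof (cases m)
    case 0 then show ?thesis by simp
  next
    case (Suc m')
    show ?thesis
    proof (cases m')
      case 0 then show ?thesis using 1(2) Suc by auto
    next
      case (Suc k)
      have h: "\<forall>i<Suc k. ((q \<circ> Suc) i, (q \<circ> Suc) (Suc i)) \<in> (if even i then Y else X)"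
        using 1(2) \<open>m = Suc m'\<close> Suc by auto
      have "((q \<circ> Suc) 0, (q \<circ> Suc) (Suc k)) \<in> alt Y X (Suc k)"
        using 1(1) h \<open>m = Suc m'\<close> Suc by blast
      moreover have "(q 0, q 1) \<in> X" using 1(2) \<open>m = Suc m'\<close> by auto
      ultimately show ?thesis using \<open>m = Suc m'\<close> Suc by auto
    qed
  qed
qed

theorem proposition6p1:
  fixes ar :: "'f \<Rightarrow> nat"
    and E :: "(('f, nat) trm \<times> ('f, nat) trm) set"
    and n :: nat
    and j :: "nat \<Rightarrow> ('f, nat) trm"
    and A :: "'a set" and ops :: "'f \<Rightarrow> 'a list \<Rightarrow> 'a"
  assumes "n \<ge> 2" and "even n"
    and "jonsson_terms ar j n"
    and "\<And>(B :: 'a set) opsB. is_model ar E B opsB \<Longrightarrow> jonsson_in ar B opsB n j"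
    and "is_model ar E A ops"
    and "is_congruence ar A ops \<alpha>" and "is_congruence ar A ops \<beta>"
    and "is_congruence ar A ops \<gamma>"
  shows "\<alpha> \<inter> (\<beta> O (\<alpha> \<inter> \<gamma>) O \<beta>) \<subseteq> alt (\<alpha> \<inter> \<beta>) (\<alpha> \<inter> \<gamma>) (2 * n)"
proof
  fix p assume "p \<in> \<alpha> \<inter> (\<beta> O (\<alpha> \<inter> \<gamma>) O \<beta>)"
  then obtain a b c d where p: "p = (a,d)" and ad: "(a,d)\<in>\<alpha>" and ab: "(a,b)\<in>\<beta>"
    and bc: "(b,c)\<in>\<alpha>" and bcg: "(b,c)\<in>\<gamma>" and cd: "(c,d)\<in>\<beta>" by auto
  have EQ: "equiv A \<theta>" if "is_congruence ar A ops \<theta>" for \<theta>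
    using that by (simp add: is_congruence_def)
  have RF: "(x,x)\<in>\<theta>" if "is_congruence ar A ops \<theta>" "x\<in>A" for \<theta> x
    using EQ[OF that(1)] that(2) by (auto simp: equiv_def refl_on_def)
  have SY: "(y,x)\<in>\<theta>" if "is_congruence ar A ops \<theta>" "(x,y)\<in>\<theta>" for \<theta> x y
    using EQ[OF that(1)] that(2) by (auto simp: equiv_def sym_def)
  have TR: "(x,z)\<in>\<theta>" if "is_congruence ar A ops \<theta>" "(x,y)\<in>\<theta>" "(y,z)\<in>\<theta>" for \<theta> x y z
    using EQ[OF that(1)] that(2,3) unfolding equiv_def trans_def by blast
  have SUB: "x\<in>A \<and> y\<in>A" if "is_congruence ar A ops \<theta>" "(x,y)\<in>\<theta>" for \<theta> x y
    using EQ[OF that(1)] that(2) by (auto simp: equiv_def refl_on_def)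
  have inA: "a\<in>A" "b\<in>A" "c\<in>A" "d\<in>A"
    using SUB[OF assms(7) ab] SUB[OF assms(7) cd] by auto
  have JI: "jonsson_in ar A ops n j" using assms(4)[OF assms(5)] .
  define J where "J i x y z = tern ops (j i) x y z" for i x y z
  have J0: "J 0 x y z = x" if "x\<in>A" "y\<in>A" "z\<in>A" for x y z
    using JI that unfolding jonsson_in_def J_def by blast
  have Jxyx: "J i x y x = x" if "i \<le> n+1" "x\<in>A" "y\<in>A" for i x y
    using JI that unfolding jonsson_in_def J_def by blast
  have Jodd: "J i x z z = J (Suc i) x z z" if "i \<le> n" "odd i" "x\<in>A" "z\<in>A" for i x z
    using JI that unfolding jonsson_in_def J_def by blast
  have Jeven: "J i x x z = J (Suc i) x x z" if "i \<le> n" "even i" "x\<in>A" "z\<in>A" for i x z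
    using JI that unfolding jonsson_in_def J_def by blast
  have Jlast: "J (n+1) x y z = z" if "x\<in>A" "y\<in>A" "z\<in>A" for x y z
    using JI that unfolding jonsson_in_def J_def by blast
  have JC: "(J i x y z, J i x' y' z') \<in> \<theta>" if "is_congruence ar A ops \<theta>" "i \<le> n+1"
    "(x,x')\<in>\<theta>" "(y,y')\<in>\<theta>" "(z,z')\<in>\<theta>" for \<theta> i x x' y y' z z'
    unfolding J_def
    using cong_tern[OF that(1) _ _ that(3-5)] assms(3) that(2) unfolding jonsson_terms_def by blast
  note Ca = assms(6) and Cb = assms(7) and Cg = assms(8)
  have AL: "(a, J i a x d) \<in> \<alpha>" if "i \<le> n+1" "x\<in>A" for i x
  proof -
    have "(J i a x d, J i a x a) \<in> \<alpha>"
      using JC[OF Ca that(1) RF[OF Ca inA(1)] RF[OF Ca that(2)] SY[OF Ca ad]] .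
    then show ?thesis using Jxyx[OF that(1) inA(1) that(2)] SY[OF Ca] by metis
  qed
  have ALn: "(a, J n b c d) \<in> \<alpha>"
  proof -
    have "(J n b c d, J n c c d) \<in> \<alpha>"
      using JC[OF Ca _ bc RF[OF Ca inA(3)] RF[OF Ca inA(4)]] by simp
    moreover have "J n c c d = d"
      using Jeven[of n c d] Jlast[of c c d] inA assms(2) by simp
    ultimately show ?thesis using TR[OF Ca ad] SY[OF Ca] by metis
  qed
  have SA: "(a, J 1 a b d) \<in> \<beta>"
  proof -
    have "J 1 a a d = a" using Jeven[of 0 a d] J0[of a a d] inA by simp
    moreover have "(J 1 a a d, J 1 a b d) \<in> \<beta>"
      using JC[OF Cb _ RF[OF Cb inA(1)] ab RF[OF Cb inA(4)]] by simp
    ultimately show ?thesis by simp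
  qed
  have SB: "(J i a b d, J i a c d) \<in> \<gamma>" "(J i a c d, J i a b d) \<in> \<gamma>" if "i \<le> n+1" for i
    using JC[OF Cg that RF[OF Cg inA(1)] bcg RF[OF Cg inA(4)]]
      JC[OF Cg that RF[OF Cg inA(1)] SY[OF Cg bcg] RF[OF Cg inA(4)]] by auto
  have SC1: "(J i a c d, J (Suc i) a c d) \<in> \<beta>" "(J i a c d, J i a d d) \<in> \<beta>"
    if "i \<le> n" "odd i" for i
  proof -
    show 1: "(J i a c d, J i a d d) \<in> \<beta>"
      using JC[OF Cb _ RF[OF Cb inA(1)] cd RF[OF Cb inA(4)]] that by simp
    have "(J (Suc i) a d d, J (Suc i) a c d) \<in> \<beta>"
      using JC[OF Cb _ RF[OF Cb inA(1)] SY[OF Cb cd] RF[OF Cb inA(4)]] that by simp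
    moreover have "J i a d d = J (Suc i) a d d" using Jodd that inA by simp
    ultimately show "(J i a c d, J (Suc i) a c d) \<in> \<beta>" using 1 TR[OF Cb] by metis
  qed
  have SC2: "(J i a b d, J (Suc i) a b d) \<in> \<beta>" if "i \<le> n" "even i" for i
  proof -
    have 1: "(J i a b d, J i a a d) \<in> \<beta>"
      using JC[OF Cb _ RF[OF Cb inA(1)] SY[OF Cb ab] RF[OF Cb inA(4)]] that by simp
    have "(J (Suc i) a a d, J (Suc i) a b d) \<in> \<beta>"
      using JC[OF Cb _ RF[OF Cb inA(1)] ab RF[OF Cb inA(4)]] that by simp
    moreover have "J i a a d = J (Suc i) a a d" using Jeven that inA by simp
    ultimately show ?thesis using 1 TR[OF Cb] by metis
  qed
  have SD: "(J (n-1) a c d, J n b c d) \<in> \<beta>"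
  proof -
    have o: "odd (n-1)" using assms(1,2) by simp
    have "(J (n-1) a c d, J (n-1) a d d) \<in> \<beta>" using SC1(2)[OF _ o] by simp
    moreover have "J (n-1) a d d = J n a d d" using Jodd[OF _ o, of a d] inA assms(1) by simp
    moreover have "(J n a d d, J n b c d) \<in> \<beta>"
      using JC[OF Cb _ ab SY[OF Cb cd] RF[OF Cb inA(4)]] by simp
    ultimately show ?thesis using TR[OF Cb] by metis
  qed
  have SE: "(J n b c d, d) \<in> \<gamma>"
  proof -
    have "(J n b c d, J n b b d) \<in> \<gamma>"
      using JC[OF Cg _ RF[OF Cg inA(2)] SY[OF Cg bcg] RF[OF Cg inA(4)]] by simp
    moreover have "J n b b d = d"
      using Jeven[of n b d] Jlast[of b b d] inA assms(2) by simp
    ultimately show ?thesis by simp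
  qed
  define q where "q k = (if k = 0 then a else if k = 2*n then d else if k = 2*n-1 then J n b c d
     else if odd k = odd ((k+1) div 2) then J ((k+1) div 2) a b d else J ((k+1) div 2) a c d)" for k
  have q0: "q 0 = a" unfolding q_def by (simp only: refl if_True)
  have "2*n \<noteq> 0" using assms(1) by simp
  then have q2n: "q (2*n) = d" unfolding q_def by (simp only: refl if_True if_False)
  have "2*n-1 \<noteq> 0" "2*n-1 \<noteq> 2*n" using assms(1) by simp_all
  then have q2n1: "q (2*n-1) = J n b c d" unfolding q_def by (simp only: refl if_True if_False)
  have qmid: "q k = (if odd k = odd ((k+1) div 2) then J ((k+1) div 2) a b d else J ((k+1) div 2) a c d)"
    if "0 < k" "k < 2*n-1" for k
  proof -
    have "k \<noteq> 0" "k \<noteq> 2*n" "k \<noteq> 2*n-1" using that by simp_all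
    then show ?thesis unfolding q_def by (simp only: refl if_True if_False)
  qed
  have QA: "(a, q k) \<in> \<alpha>" if kle: "k \<le> 2*n" for k
  proof -
    have "(k+1) div 2 \<le> n+1" using that by linarith
    have "q k = a \<or> q k = d \<or> q k = J n b c d \<or> q k = J ((k+1) div 2) a b d \<or> q k = J ((k+1) div 2) a c d"
    proof -
      consider "k = 0" | "k = 2*n" | "k = 2*n-1" | "0 < k \<and> k < 2*n-1" using kle by linarith
      then show ?thesis
      proof cases
        case 1 then show ?thesis using q0 by blast
      next
        case 2 then show ?thesis using q2n by blast
      next
        case 3 then show ?thesis using q2n1 by blast
      next
        case 4 then have "q k = (if odd k = odd ((k+1) div 2) then J ((k+1) div 2) a b d else J ((k+1) div 2) a c d)"
          using qmid by blast
        then show ?thesis by (cases "odd k = odd ((k+1) div 2)") (simp only: if_True if_False simp_thms)+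
      qed
    qed
    then show ?thesis
    proof (elim disjE)
      assume "q k = J ((k+1) div 2) a b d" then show ?thesis using AL[OF \<open>(k+1) div 2 \<le> n+1\<close> inA(2)] by simp
    next
      assume "q k = J ((k+1) div 2) a c d" then show ?thesis using AL[OF \<open>(k+1) div 2 \<le> n+1\<close> inA(3)] by simp
    qed (use ALn ad RF[OF Ca inA(1)] in simp_all)
  qed
  have QS: "(q k, q (Suc k)) \<in> (if even k then \<beta> else \<gamma>)" if klt: "k < 2*n" for k
  proof -
    consider "k = 0" | "k = 2*n-1" | "k = 2*n-2" | "0 < k \<and> k < 2*n-2 \<and> odd k"
      | "0 < k \<and> k < 2*n-2 \<and> even k" using klt by linarith
    then show ?thesis
    proof cases
      case 1
      have "q (Suc 0) = J 1 a b d" using qmid[of 1] assms(1) by simp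
      then show ?thesis using SA 1 q0 by simp
    next
      case 2
      have "q k = J n b c d" "q (Suc k) = d" "odd k" using 2 assms(1) q2n1 q2n by (auto simp del: One_nat_def)
      then show ?thesis using SE by simp
    next
      case 3
      have e: "even k" using 3 by simp
      have "(k+1) div 2 = n - 1" using 3 assms(1) by simp
      moreover have "odd (n-1)" using assms(1,2) by simp
      ultimately have "q k = J (n-1) a c d" using 3 assms(1) e qmid[of k] by auto
      moreover have "q (Suc k) = J n b c d" using 3 assms(1) q2n1
        by (metis Suc_diff_Suc Suc_1 diff_Suc_1 less_le_trans mult_2 nat_1_add_1 numeral_le_iff one_less_numeral_iff semiring_norm(76) trans_less_add1)
      ultimately show ?thesis using SD e by simp
    next
      case 4
      define i where "i = (k+1) div 2"
      have k: "k = 2*i - 1" "i \<ge> 1" "i \<le> n - 1" "(Suc k + 1) div 2 = i" using 4 unfolding i_def by auto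
      have "q k = (if odd i then J i a b d else J i a c d)"
        "q (Suc k) = (if odd i then J i a c d else J i a b d)"
        using 4 k qmid[of k] qmid[of "Suc k"] unfolding i_def[symmetric] by auto
      then show ?thesis using SB[of i] k 4 by auto
    next
      case 5
      define i where "i = k div 2"
      have k: "k = 2*i" "i \<ge> 1" "i \<le> n - 2" "(k + 1) div 2 = i" "(Suc k + 1) div 2 = Suc i"
        using 5 unfolding i_def by auto
      have "q k = (if odd i then J i a c d else J i a b d)"
        "q (Suc k) = (if odd i then J (Suc i) a c d else J (Suc i) a b d)"
        using 5 k qmid[of k] qmid[of "Suc k"] by auto
      then show ?thesis using SC1(1)[of i] SC2[of i] k 5 by auto
    qed
  qed
  have "\<forall>k<2*n. (q k, q (Suc k)) \<in> (if even k then \<alpha> \<inter> \<beta> else \<alpha> \<inter> \<gamma>)"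
  proof (intro allI impI)
    fix k assume k: "k < 2*n"
    have "(q k, q (Suc k)) \<in> \<alpha>"
      using QA[of k] QA[of "Suc k"] k SY[OF Ca] TR[OF Ca] by (meson Suc_leI less_imp_le)
    then show "(q k, q (Suc k)) \<in> (if even k then \<alpha> \<inter> \<beta> else \<alpha> \<inter> \<gamma>)"
      using QS[OF k] by auto
  qed
  from alt_seq[OF this] have "(q 0, q (2*n)) \<in> alt (\<alpha> \<inter> \<beta>) (\<alpha> \<inter> \<gamma>) (2 * n)" .
  moreover note q0 q2n
  ultimately show "p \<in> alt (\<alpha> \<inter> \<beta>) (\<alpha> \<inter> \<gamma>) (2 * n)" using p by simp
qed

end
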